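(* Let $\mu$ be a Radon measure on $\mathbb{R}^d$ such that $R_\mu(p\to q)$ holds with constant $C$. Then there exists a constant $M$ depending only on $d,p,q,C$ such that $\mu(B(x,r))\le M r^{dq/p'}$ for every $x\in\mathbb{R}^d$ and every $r>0$; in particular $\mu$ is absolutely continuous with respect to $\mathcal{H}^{dq/p'}$. Moreover, if $0<\Theta^{*s}(\mu,x)<\infty$ for all $x$ in a set of positive $\mu$-measure, then $q\le \frac{s}{d}p'$.
   Context: The Fourier transform of $f\in\mathcal{S}(\mathbb{R}^d)$ (Schwartz space) is $\hat f(\xi)=\int e^{-2\pi i \xi\cdot x}f(x)\,dx$. A measure $\mu$ on $\mathbb{R}^d$ admits $(p,q)$ restriction with constant $C$, written $R_\mu(p\to q)$, if $\|\hat f\|_{L^q(\mu)}\le C\|f\|_{L^p(\mathbb{R}^d)}$ for every $f\in\mathcal{S}(\mathbb{R}^d)$. Here $p'$ is the conjugate exponent of $p$. $\mathcal{H}^t$ denotes the $t$-dimensional Hausdorff measure, and $\Theta^{*s}(\mu,x)=\limsup_{r\to0}\frac{\mu(B(x,r))}{\omega_s r^s}$ is the upper $s$-dimensional density. *)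

theory Defs
  imports "HOL-Analysis.Analysis" "HOL-Library.Liminf_Limsup"
begin

fun partials :: "'a::euclidean_space list \<Rightarrow> ('a \<Rightarrow> complex) \<Rightarrow> ('a \<Rightarrow> complex)" where
  "partials [] f = f"
| "partials (v # vs) f = (\<lambda>x. frechet_derivative (partials vs f) (at x) v)"

definition schwartz :: "('a::euclidean_space \<Rightarrow> complex) \<Rightarrow> bool" where
  "schwartz f \<longleftrightarrow>
     (\<forall>vs. set vs \<subseteq> Basis \<longrightarrow> (\<forall>x. partials vs f differentiable (at x))) \<and>
     (\<forall>vs (N::nat). set vs \<subseteq> Basis \<longrightarrow>
        bounded (range (\<lambda>x. norm x ^ N * norm (partials vs f x))))"

definition fourier :: "('a::euclidean_space \<Rightarrow> complex) \<Rightarrow> 'a \<Rightarrow> complex" where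
  "fourier f \<xi> = (LINT x|lborel. cis (- 2 * pi * (\<xi> \<bullet> x)) * f x)"

text \<open>L^p norm with respect to Lebesgue measure (used only for Schwartz functions,
  where it is finite).\<close>
definition Lp_norm :: "real \<Rightarrow> ('a::euclidean_space \<Rightarrow> complex) \<Rightarrow> real" where
  "Lp_norm p f = (LINT x|lborel. norm (f x) powr p) powr (1 / p)"

text \<open>Restriction estimate R_mu(p -> q) with constant C:
  ||hat f||_{L^q(mu)} <= C ||f||_{L^p} for all Schwartz f, stated as
  integral |hat f|^q dmu <= (C ||f||_p)^q (nonnegative extended integral).\<close>
definition restriction :: "'a::euclidean_space measure \<Rightarrow> real \<Rightarrow> real \<Rightarrow> real \<Rightarrow> bool" where
  "restriction \<mu> p q C \<longleftrightarrow>
     (\<forall>f. schwartz f \<longrightarrow>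
        (\<integral>\<^sup>+ \<xi>. ennreal (norm (fourier f \<xi>) powr q) \<partial>\<mu>) \<le> ennreal ((C * Lp_norm p f) powr q))"

definition radon_measure :: "'a::euclidean_space measure \<Rightarrow> bool" where
  "radon_measure \<mu> \<longleftrightarrow> sets \<mu> = sets borel \<and> (\<forall>K. compact K \<longrightarrow> emeasure \<mu> K < \<infinity>)"

text \<open>Volume of the unit ball in dimension s (for real s >= 0).\<close>
definition omega :: "real \<Rightarrow> real" where
  "omega s = pi powr (s / 2) / Gamma (s / 2 + 1)"

text \<open>Contribution of a covering set: omega_t (diam E / 2)^t, with 0^0 = 1 and empty set 0.\<close>
definition hcontrib :: "real \<Rightarrow> 'a::euclidean_space set \<Rightarrow> ennreal" where
  "hcontrib t E = (if E = {} then 0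
      else ennreal (omega t * (if t = 0 then 1 else (diameter E / 2) powr t)))"

definition hausdorff_delta :: "real \<Rightarrow> real \<Rightarrow> 'a::euclidean_space set \<Rightarrow> ennreal" where
  "hausdorff_delta t \<delta> A =
     (INF C \<in> {C :: nat \<Rightarrow> 'a set. A \<subseteq> (\<Union>i. C i) \<and>
                 (\<forall>i. bounded (C i) \<and> diameter (C i) \<le> \<delta>)}.
        \<Sum>i. hcontrib t (C i))"

definition hausdorff :: "real \<Rightarrow> 'a::euclidean_space set \<Rightarrow> ennreal" where
  "hausdorff t A = (SUP \<delta> \<in> {0<..}. hausdorff_delta t \<delta> A)"

definition upper_density :: "'a::euclidean_space measure \<Rightarrow> real \<Rightarrow> 'a \<Rightarrow> ereal" where
  "upper_density \<mu> s x =
     Limsup (at_right 0) (\<lambda>r. enn2ereal (emeasure \<mu> (ball x r)) / ereal (omega s * r powr s))"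

end

theory Submission
  imports Defs
begin

lemma exp_ge_pow:
  fixes x :: real assumes "0 \<le> x" shows "x ^ n / fact n \<le> exp x"
proof -
  have s: "summable (\<lambda>k. x ^ k /\<^sub>R fact k)" using exp_converges sums_summable by blast
  have "x ^ n / fact n = (\<Sum>k\<in>{n}. x ^ k /\<^sub>R fact k)" by (simp add: divide_inverse_commute)
  also have "\<dots> \<le> (\<Sum>k. x ^ k /\<^sub>R fact k)"
    by (rule sum_le_suminf[OF s]) (auto simp: assms)
  also have "\<dots> = exp x" using exp_converges sums_unique by metis
  finally show ?thesis .
qed

lemma pow_gauss_bound:
  fixes c :: real assumes c: "0 < c"
  shows "\<exists>B. \<forall>y\<ge>0. (1 + y) ^ n * exp (- c * y\<^sup>2) \<le> B"
proof (intro exI allI impI)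
  fix y :: real assume y: "0 \<le> y"
  have e1: "exp (- c * y\<^sup>2) \<le> 1" using c y by simp
  have ep: "0 < exp (- c * y\<^sup>2)" by simp
  have "(c * y\<^sup>2) ^ n / fact n \<le> exp (c * y\<^sup>2)" by (rule exp_ge_pow) (use c in auto)
  hence "c ^ n * y ^ (2 * n) \<le> fact n * exp (c * y\<^sup>2)"
    by (simp add: field_simps power_mult_distrib power_mult power2_eq_square)
  hence "c ^ n * (y ^ (2 * n) * exp (- c * y\<^sup>2)) \<le> fact n"
    by (simp add: exp_minus field_simps)
  hence h2: "y ^ (2 * n) * exp (- c * y\<^sup>2) \<le> fact n / c ^ n"
    using c by (simp add: field_simps)
  have "1 + y \<le> 2 * max 1 y" by simp
  hence "(1 + y) ^ n \<le> (2 * max 1 y) ^ n" by (rule power_mono) (use y in simp)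
  also have "\<dots> = 2 ^ n * max 1 y ^ n" by (simp add: power_mult_distrib)
  also have "max 1 y ^ n \<le> 1 + y ^ (2 * n)"
  proof (cases "y \<le> 1")
    case True thus ?thesis using y by (simp add: max_def)
  next
    case False
    hence "y ^ n \<le> y ^ (2 * n)" by (intro power_increasing) auto
    moreover have "max 1 y = y" using False by simp
    ultimately show ?thesis by simp
  qed
  hence "2 ^ n * max 1 y ^ n \<le> 2 ^ n * (1 + y ^ (2 * n))" by simp
  finally have "(1 + y) ^ n \<le> 2 ^ n * (1 + y ^ (2 * n))" .
  hence "(1 + y) ^ n * exp (- c * y\<^sup>2) \<le> 2 ^ n * (1 + y ^ (2 * n)) * exp (- c * y\<^sup>2)"
    using ep by (intro mult_right_mono) auto
  also have "\<dots> = 2 ^ n * (exp (- c * y\<^sup>2) + y ^ (2 * n) * exp (- c * y\<^sup>2))"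
    by (simp add: algebra_simps)
  also have "\<dots> \<le> 2 ^ n * (1 + fact n / c ^ n)"
    using e1 h2 by (intro mult_left_mono add_mono) auto
  finally show "(1 + y) ^ n * exp (- c * y\<^sup>2) \<le> 2 ^ n * (1 + fact n / c ^ n)" .
qed

lemma integrable_decay:
  fixes \<phi> :: "'a::euclidean_space \<Rightarrow> real"
  assumes meas: "\<phi> \<in> borel_measurable borel" and nn: "\<And>y. 0 \<le> \<phi> y"
    and bd: "\<And>y. (1 + norm y) ^ (DIM('a) + 2) * \<phi> y \<le> B"
  shows "integrable lborel \<phi>"
proof -
  define d where "d = DIM('a)"
  define V where "V = unit_ball_vol (real d)"
  have B0: "0 \<le> B" using bd[of 0] nn[of 0] by (metis mult_nonneg_nonneg norm_ge_zero order_trans zero_le_one add_nonneg_nonneg zero_le_power)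
  define b where "b k = B / (real k + 1) ^ (d + 2)" for k :: nat
  have b0: "0 \<le> b k" for k using B0 by (simp add: b_def)
  have pt: "ennreal (\<phi> y) \<le> (\<Sum>k. ennreal (b k) * indicator (ball 0 (real k + 1)) y)" for y :: 'a
  proof -
    define k where "k = nat \<lfloor>norm y\<rfloor>"
    have k1: "real k \<le> norm y" "norm y < real k + 1" unfolding k_def
      by (simp_all add: of_nat_nat)
    have pos: "0 < (1 + norm y) ^ (d + 2)" by (simp add: add_pos_nonneg)
    have "\<phi> y \<le> B / (1 + norm y) ^ (d + 2)"
      using bd[of y] pos by (simp add: field_simps d_def mult.commute)
    also have "\<dots> \<le> b k" unfolding b_def
      using B0 k1 by (intro divide_left_mono power_mono mult_pos_pos) auto
    finally have "ennreal (\<phi> y) \<le> ennreal (b k) * indicator (ball 0 (real k + 1)) y"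
      using k1 by (simp add: indicator_def ennreal_leI)
    also have "\<dots> = (\<Sum>j\<in>{k}. ennreal (b j) * indicator (ball 0 (real j + 1)) y)" by (simp only: finite.emptyI empty_iff sum.insert sum.empty add_0_right not_False_eq_True)
    also have "\<dots> \<le> (\<Sum>j. ennreal (b j) * indicator (ball 0 (real j + 1)) y)"
      by (rule sum_le_suminf) (auto intro: summableI)
    finally show ?thesis .
  qed
  have vol: "emeasure lborel (ball (0::'a) \<rho>) = ennreal (V * \<rho> ^ d)" if "0 \<le> \<rho>" for \<rho>
    using content_ball[of \<rho> "0::'a"] that emeasure_lborel_ball_finite[of "0::'a" \<rho>]
    by (simp add: V_def d_def emeasure_eq_ennreal_measure)
  have V0: "0 \<le> V" unfolding V_def by simp
  have "(\<integral>\<^sup>+ y. ennreal (norm (\<phi> y)) \<partial>lborel) = (\<integral>\<^sup>+ y. ennreal (\<phi> y) \<partial>lborel)"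
    using nn by simp
  also have "\<dots> \<le> (\<integral>\<^sup>+ y. (\<Sum>k. ennreal (b k) * indicator (ball (0::'a) (real k + 1)) y) \<partial>lborel)"
    by (rule nn_integral_mono) (rule pt)
  also have "\<dots> = (\<Sum>k. \<integral>\<^sup>+ y. ennreal (b k) * indicator (ball (0::'a) (real k + 1)) y \<partial>lborel)"
    by (rule nn_integral_suminf) (intro borel_measurable_times_ennreal borel_measurable_const borel_measurable_indicator, simp)
  also have "\<dots> = (\<Sum>k. ennreal (b k * (V * (real k + 1) ^ d)))"
    by (simp add: nn_integral_cmult_indicator vol ennreal_mult b0 V0)
  also have "\<dots> = (\<Sum>k. ennreal (B * V * inverse (real (Suc k) ^ 2)))"
  proof (intro suminf_cong arg_cong[where f=ennreal])
    fix k :: nat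
    have p: "(real k + 1) ^ (d + 2) = (real k + 1) ^ d * (real (Suc k)) ^ 2"
      by (simp only: power_add of_nat_Suc add.commute)
    have "(real k + 1) ^ d > 0" by simp
    thus "b k * (V * (real k + 1) ^ d) = B * V * inverse (real (Suc k) ^ 2)"
      unfolding b_def p by (simp add: field_simps)
  qed
  also have "\<dots> < \<infinity>"
  proof -
    have "summable (\<lambda>k. inverse (real k ^ 2))" by (rule inverse_power_summable) auto
    hence "summable (\<lambda>k. inverse (real (Suc k) ^ 2))" by (subst summable_Suc_iff)
    hence "summable (\<lambda>k. B * V * inverse (real (Suc k) ^ 2))" by (rule summable_mult)
    hence "(\<Sum>k. ennreal (B * V * inverse (real (Suc k) ^ 2))) \<noteq> top"
      by (rule ennreal_suminf_neq_top) (use B0 V0 in simp)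
    thus ?thesis by (simp add: top.not_eq_extremum)
  qed
  finally show ?thesis by (intro integrableI_bounded) (use meas in auto)
qed

lemma nn_integral_scale:
  fixes F :: "'a::euclidean_space \<Rightarrow> ennreal"
  assumes F: "F \<in> borel_measurable borel" and a: "0 < a"
  shows "(\<integral>\<^sup>+ y. F (y /\<^sub>R a) \<partial>lborel) = ennreal (a ^ DIM('a)) * (\<integral>\<^sup>+ y. F y \<partial>lborel)"
proof -
  have m: "(\<lambda>y. F (y /\<^sub>R a)) \<in> borel_measurable borel" using F by measurable
  have "(\<integral>\<^sup>+ y. F (y /\<^sub>R a) \<partial>lborel) =
     (\<integral>\<^sup>+ y. F (y /\<^sub>R a) \<partial>(density (distr lborel borel (\<lambda>x. 0 + a *\<^sub>R x)) (\<lambda>_. \<bar>a\<bar> ^ DIM('a))))"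
    using lborel_affine[of a "0::'a"] a by simp
  also have "\<dots> = (\<integral>\<^sup>+ y. ennreal (\<bar>a\<bar> ^ DIM('a)) * F (y /\<^sub>R a) \<partial>(distr lborel borel (\<lambda>x. 0 + a *\<^sub>R x)))"
    using m by (subst nn_integral_density) auto
  also have "\<dots> = (\<integral>\<^sup>+ x. ennreal (\<bar>a\<bar> ^ DIM('a)) * F ((0 + a *\<^sub>R x) /\<^sub>R a) \<partial>lborel)"
    using m by (subst nn_integral_distr) auto
  also have "\<dots> = (\<integral>\<^sup>+ x. ennreal (a ^ DIM('a)) * F x \<partial>lborel)"
    using a by simp
  also have "\<dots> = ennreal (a ^ DIM('a)) * (\<integral>\<^sup>+ y. F y \<partial>lborel)"
    using F by (simp add: nn_integral_cmult)
  finally show ?thesis .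
qed

lemma integral_scale:
  fixes F :: "'a::euclidean_space \<Rightarrow> real"
  assumes F: "F \<in> borel_measurable borel" and nn: "\<And>y. 0 \<le> F y" and int: "integrable lborel F"
    and a: "0 < a"
  shows "integrable lborel (\<lambda>y. F (y /\<^sub>R a))"
    "integral\<^sup>L lborel (\<lambda>y. F (y /\<^sub>R a)) = a ^ DIM('a) * integral\<^sup>L lborel F"
proof -
  have m: "(\<lambda>y. F (y /\<^sub>R a)) \<in> borel_measurable borel" using F by measurable
  have e: "(\<integral>\<^sup>+ y. ennreal (F y) \<partial>lborel) = ennreal (integral\<^sup>L lborel F)"
    using int nn by (intro nn_integral_eq_integral) auto
  have e2: "(\<integral>\<^sup>+ y. ennreal (F (y /\<^sub>R a)) \<partial>lborel) = ennreal (a ^ DIM('a) * integral\<^sup>L lborel F)"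
    using nn_integral_scale[of "\<lambda>y. ennreal (F y)" a] F a e
    by (simp add: ennreal_mult integral_nonneg_AE nn)
  show i: "integrable lborel (\<lambda>y. F (y /\<^sub>R a))"
    using m nn e2 by (intro integrableI_nn_integral_finite) auto
  have "ennreal (integral\<^sup>L lborel (\<lambda>y. F (y /\<^sub>R a))) = ennreal (a ^ DIM('a) * integral\<^sup>L lborel F)"
    using e2 i nn by (subst nn_integral_eq_integral[symmetric]) auto
  thus "integral\<^sup>L lborel (\<lambda>y. F (y /\<^sub>R a)) = a ^ DIM('a) * integral\<^sup>L lborel F"
    using a nn by (subst (asm) ennreal_inj) (auto intro!: integral_nonneg_AE)
qed

inductive_set PP :: "('a::euclidean_space \<Rightarrow> complex) set" where
  PPconst: "(\<lambda>y. c) \<in> PP"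
| PPlin: "(\<lambda>y. complex_of_real (y \<bullet> v)) \<in> PP"
| PPadd: "p \<in> PP \<Longrightarrow> q \<in> PP \<Longrightarrow> (\<lambda>y. p y + q y) \<in> PP"
| PPmult: "p \<in> PP \<Longrightarrow> q \<in> PP \<Longrightarrow> (\<lambda>y. p y * q y) \<in> PP"

lemma of_real_inner_has_derivative:
  "((\<lambda>y. complex_of_real (y \<bullet> v)) has_derivative (\<lambda>h. complex_of_real (h \<bullet> v))) (at x)"
proof -
  have "bounded_linear (\<lambda>h. complex_of_real (h \<bullet> v))"
    by (intro bounded_linear_compose[OF bounded_linear_of_real] bounded_linear_inner_left)
  thus ?thesis by (rule bounded_linear_imp_has_derivative)
qed

lemma PP_deriv:
  assumes "p \<in> PP"
  shows "\<exists>D. (\<forall>y. (p has_derivative D y) (at y)) \<and> (\<forall>v. (\<lambda>y. D y v) \<in> PP)"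
  using assms
proof induction
  case (PPconst c)
  show ?case by (rule exI[of _ "\<lambda>y h. 0"]) (auto intro: PP.PPconst)
next
  case (PPlin v)
  show ?case
    by (rule exI[of _ "\<lambda>y h. complex_of_real (h \<bullet> v)"])
       (auto intro: PP.PPconst of_real_inner_has_derivative)
next
  case (PPadd p q)
  then obtain Dp Dq where "\<forall>y. (p has_derivative Dp y) (at y)" "\<forall>v. (\<lambda>y. Dp y v) \<in> PP"
     "\<forall>y. (q has_derivative Dq y) (at y)" "\<forall>v. (\<lambda>y. Dq y v) \<in> PP" by blast
  thus ?case
    by (intro exI[of _ "\<lambda>y h. Dp y h + Dq y h"]) (auto intro: PP.PPadd has_derivative_add)
next
  case (PPmult p q)
  then obtain Dp Dq where h: "\<forall>y. (p has_derivative Dp y) (at y)" "\<forall>v. (\<lambda>y. Dp y v) \<in> PP"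
     "\<forall>y. (q has_derivative Dq y) (at y)" "\<forall>v. (\<lambda>y. Dq y v) \<in> PP" by blast
  show ?case
  proof (intro exI[of _ "\<lambda>y h. p y * Dq y h + Dp y h * q y"] conjI allI)
    fix y show "((\<lambda>y. p y * q y) has_derivative (\<lambda>h. p y * Dq y h + Dp y h * q y)) (at y)"
      using h by (intro has_derivative_mult) auto
  next
    fix v show "(\<lambda>y. p y * Dq y v + Dp y v * q y) \<in> PP"
      using h PPmult.hyps by (intro PP.PPadd PP.PPmult) auto
  qed
qed

lemma PP_bound:
  assumes "p \<in> PP"
  shows "\<exists>K n. 0 \<le> K \<and> (\<forall>y. norm (p y) \<le> K * (1 + norm y) ^ n)"
  using assms
proof induction
  case (PPconst c)
  show ?case by (rule exI[of _ "norm c"], rule exI[of _ 0]) simp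
next
  case (PPlin v)
  show ?case
  proof (rule exI[of _ "norm v"], rule exI[of _ 1], intro conjI allI)
    fix y :: 'a
    have "norm (complex_of_real (y \<bullet> v)) = \<bar>y \<bullet> v\<bar>" by simp
    also have "\<dots> \<le> norm y * norm v" by (rule Cauchy_Schwarz_ineq2)
    also have "\<dots> \<le> norm v * (1 + norm y) ^ 1" by (simp add: mult.commute mult_left_mono)
    finally show "norm (complex_of_real (y \<bullet> v)) \<le> norm v * (1 + norm y) ^ 1" .
  qed simp
next
  case (PPadd p q)
  then obtain K1 n1 K2 n2 where h: "0 \<le> K1" "\<forall>y. norm (p y) \<le> K1 * (1 + norm y) ^ n1"
    "0 \<le> K2" "\<forall>y. norm (q y) \<le> K2 * (1 + norm y) ^ n2" by blast
  show ?case
  proof (rule exI[of _ "K1 + K2"], rule exI[of _ "n1 + n2"], intro conjI allI)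
    fix y :: 'a
    have a1: "(1 + norm y) ^ n1 \<le> (1 + norm y) ^ (n1 + n2)" by (intro power_increasing) auto
    have a2: "(1 + norm y) ^ n2 \<le> (1 + norm y) ^ (n1 + n2)" by (intro power_increasing) auto
    have "norm (p y + q y) \<le> norm (p y) + norm (q y)" by (rule norm_triangle_ineq)
    also have "\<dots> \<le> K1 * (1 + norm y) ^ n1 + K2 * (1 + norm y) ^ n2" using h by (intro add_mono) auto
    also have "\<dots> \<le> K1 * (1 + norm y) ^ (n1 + n2) + K2 * (1 + norm y) ^ (n1 + n2)"
      using h a1 a2 by (intro add_mono mult_left_mono) auto
    finally show "norm (p y + q y) \<le> (K1 + K2) * (1 + norm y) ^ (n1 + n2)" by (simp add: algebra_simps)
  qed (use h in simp)
next
  case (PPmult p q)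
  then obtain K1 n1 K2 n2 where h: "0 \<le> K1" "\<forall>y. norm (p y) \<le> K1 * (1 + norm y) ^ n1"
    "0 \<le> K2" "\<forall>y. norm (q y) \<le> K2 * (1 + norm y) ^ n2" by blast
  show ?case
  proof (rule exI[of _ "K1 * K2"], rule exI[of _ "n1 + n2"], intro conjI allI)
    fix y :: 'a
    have "norm (p y * q y) = norm (p y) * norm (q y)" by (simp add: norm_mult)
    also have "\<dots> \<le> (K1 * (1 + norm y) ^ n1) * (K2 * (1 + norm y) ^ n2)"
      using h by (intro mult_mono) auto
    finally show "norm (p y * q y) \<le> (K1 * K2) * (1 + norm y) ^ (n1 + n2)" by (simp add: algebra_simps power_add)
  qed (use h in simp)
qed

definition tf :: "real \<Rightarrow> 'a \<Rightarrow> 'a::euclidean_space \<Rightarrow> complex" where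
  "tf c x y = exp (complex_of_real (- c * (y \<bullet> y)) + \<i> * complex_of_real (2 * pi * (x \<bullet> y)))"

definition DQ :: "real \<Rightarrow> 'a \<Rightarrow> 'a::euclidean_space \<Rightarrow> 'a \<Rightarrow> complex" where
  "DQ c x y h = complex_of_real (- c * (2 * (y \<bullet> h))) + \<i> * complex_of_real (2 * pi * (x \<bullet> h))"

lemma Q_has_derivative:
  "((\<lambda>y. complex_of_real (- c * (y \<bullet> y)) + \<i> * complex_of_real (2 * pi * (x \<bullet> y)))
     has_derivative DQ c x y) (at y)"
  unfolding DQ_def
  by (rule has_derivative_eq_rhs, (rule derivative_intros)+) (auto simp: fun_eq_iff inner_commute algebra_simps)

lemma tf_has_derivative:
  "(tf c x has_derivative (\<lambda>h. tf c x y * DQ c x y h)) (at y)"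
proof -
  have "((\<lambda>y. exp (complex_of_real (- c * (y \<bullet> y)) + \<i> * complex_of_real (2 * pi * (x \<bullet> y))))
     has_derivative (\<lambda>h. exp (complex_of_real (- c * (y \<bullet> y)) + \<i> * complex_of_real (2 * pi * (x \<bullet> y))) * DQ c x y h)) (at y)"
    using has_derivative_compose[OF Q_has_derivative DERIV_exp[unfolded has_field_derivative_def]] .
  thus ?thesis unfolding tf_def[abs_def] .
qed

lemma DQ_PP: "(\<lambda>y. DQ c x y v) \<in> PP"
proof -
  have "(\<lambda>y. DQ c x y v) = (\<lambda>y. (\<lambda>y. complex_of_real (-2 * c)) y * (\<lambda>y. complex_of_real (y \<bullet> v)) y
     + (\<lambda>y. \<i> * complex_of_real (2 * pi * (x \<bullet> v))) y)"
    by (simp add: DQ_def fun_eq_iff)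
  also have "\<dots> \<in> PP" by (intro PP.PPadd PP.PPmult PP.PPconst PP.PPlin)
  finally show ?thesis .
qed

lemma partials_tf: "\<exists>p\<in>PP. partials vs (tf c x) = (\<lambda>y. p y * tf c x y)"
proof (induction vs)
  case Nil
  show ?case by (rule bexI[of _ "\<lambda>y. 1"]) (auto intro: PP.PPconst)
next
  case (Cons v vs)
  then obtain p where p: "p \<in> PP" "partials vs (tf c x) = (\<lambda>y. p y * tf c x y)" by blast
  obtain Dp where Dp: "\<forall>y. (p has_derivative Dp y) (at y)" "\<forall>v. (\<lambda>y. Dp y v) \<in> PP"
    using PP_deriv[OF p(1)] by blast
  have hd: "((\<lambda>y. p y * tf c x y) has_derivative (\<lambda>h. p y * (tf c x y * DQ c x y h) + Dp y h * tf c x y)) (at y)" for y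
    using Dp(1) tf_has_derivative by (intro has_derivative_mult) auto
  have "partials (v # vs) (tf c x) = (\<lambda>y. frechet_derivative (\<lambda>y. p y * tf c x y) (at y) v)"
    using p(2) by simp
  also have "\<dots> = (\<lambda>y. (p y * DQ c x y v + Dp y v) * tf c x y)"
    using frechet_derivative_at[OF hd] by (auto simp: fun_eq_iff algebra_simps)
  finally have "partials (v # vs) (tf c x) = (\<lambda>y. (p y * DQ c x y v + Dp y v) * tf c x y)" .
  moreover have "(\<lambda>y. p y * DQ c x y v + Dp y v) \<in> PP"
    using p(1) Dp(2) DQ_PP by (intro PP.PPadd PP.PPmult) auto
  ultimately show ?case by (intro bexI[of _ "\<lambda>y. p y * DQ c x y v + Dp y v"]) auto
qed

lemma norm_tf: "norm (tf c x y) = exp (- c * norm y ^ 2)"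
  by (simp add: tf_def power2_norm_eq_inner)

lemma schwartz_tf:
  fixes x :: "'a::euclidean_space"
  assumes c: "0 < c"
  shows "schwartz (tf c x)"
  unfolding schwartz_def
proof (intro conjI allI impI)
  fix vs :: "'a list" and y :: 'a
  obtain p where p: "p \<in> PP" "partials vs (tf c x) = (\<lambda>y. p y * tf c x y)" using partials_tf by blast
  obtain Dp where Dp: "\<forall>y. (p has_derivative Dp y) (at y)" using PP_deriv[OF p(1)] by blast
  have "((\<lambda>y. p y * tf c x y) has_derivative (\<lambda>h. p y * (tf c x y * DQ c x y h) + Dp y h * tf c x y)) (at y)"
    using Dp(1) tf_has_derivative by (intro has_derivative_mult) auto
  thus "partials vs (tf c x) differentiable (at y)" unfolding p(2) by (rule differentiableI)
next
  fix vs :: "'a list" and N :: nat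
  obtain p where p: "p \<in> PP" "partials vs (tf c x) = (\<lambda>y. p y * tf c x y)" using partials_tf by blast
  obtain K n where K: "0 \<le> K" "\<forall>y. norm (p y) \<le> K * (1 + norm y) ^ n" using PP_bound[OF p(1)] by blast
  obtain B where B: "\<forall>t\<ge>0. (1 + t) ^ (N + n) * exp (- c * t\<^sup>2) \<le> B" using pow_gauss_bound[OF c] by blast
  show "bounded (range (\<lambda>y. norm y ^ N * norm (partials vs (tf c x) y)))"
    unfolding bounded_real
  proof (intro exI ballI)
    fix z assume "z \<in> range (\<lambda>y. norm y ^ N * norm (partials vs (tf c x) y))"
    then obtain y where z: "z = norm y ^ N * norm (p y * tf c x y)" using p(2) by auto
    have "norm y ^ N \<le> (1 + norm y) ^ N" by (intro power_mono) auto
    have "\<bar>z\<bar> = norm y ^ N * (norm (p y) * exp (- c * norm y ^ 2))" by (simp add: z norm_mult norm_tf)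
    also have "\<dots> \<le> (1 + norm y) ^ N * ((K * (1 + norm y) ^ n) * exp (- c * norm y ^ 2))"
      using K by (intro mult_mono mult_right_mono power_mono) auto
    also have "\<dots> = K * ((1 + norm y) ^ (N + n) * exp (- c * norm y ^ 2))" by (simp add: power_add algebra_simps)
    also have "\<dots> \<le> K * B" using B K by (intro mult_left_mono) auto
    finally show "\<bar>z\<bar> \<le> K * B" .
  qed
qed

definition gm :: "nat \<Rightarrow> real \<Rightarrow> 'a::euclidean_space \<Rightarrow> real" where
  "gm m c y = norm y ^ m * exp (- c * norm y ^ 2)"

lemma gm_meas[measurable]: "gm m c \<in> borel_measurable borel"
  unfolding gm_def[abs_def] by measurable

lemma gm_nonneg: "0 \<le> gm m c y" by (simp add: gm_def)

lemma gm_integrable: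
  assumes c: "0 < c" shows "integrable lborel (gm m c :: 'a::euclidean_space \<Rightarrow> real)"
proof -
  obtain B where B: "\<forall>t\<ge>0. (1 + t) ^ (DIM('a) + 2 + m) * exp (- c * t\<^sup>2) \<le> B"
    using pow_gauss_bound[OF c] by blast
  have "(1 + norm y) ^ (DIM('a) + 2) * gm m c y \<le> B" for y :: 'a
  proof -
  have "norm y ^ m \<le> (1 + norm y) ^ m" by (intro power_mono) auto
  hence "(1 + norm y) ^ (DIM('a) + 2) * gm m c y \<le> (1 + norm y) ^ (DIM('a) + 2) * ((1 + norm y) ^ m * exp (- c * norm y ^ 2))"
    unfolding gm_def by (intro mult_left_mono mult_right_mono) auto
  also have "\<dots> = (1 + norm y) ^ (DIM('a) + 2 + m) * exp (- c * (norm y)\<^sup>2)"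
    by (simp add: power_add)
  also have "\<dots> \<le> B" using B by auto
  finally show "(1 + norm y) ^ (DIM('a) + 2) * gm m c y \<le> B" .
  qed
  thus ?thesis by (rule integrable_decay[OF gm_meas gm_nonneg])
qed

lemma gm_scale:
  assumes c: "0 < c" and a: "0 < a"
  shows "integrable lborel (\<lambda>y::'a::euclidean_space. norm y ^ m * exp (- (c / a\<^sup>2) * norm y ^ 2))"
    "integral\<^sup>L lborel (\<lambda>y::'a. norm y ^ m * exp (- (c / a\<^sup>2) * norm y ^ 2))
       = a ^ (DIM('a) + m) * integral\<^sup>L lborel (gm m c :: 'a \<Rightarrow> real)"
proof -
  have eq: "(\<lambda>y::'a. norm y ^ m * exp (- (c / a\<^sup>2) * norm y ^ 2)) = (\<lambda>y. a ^ m * gm m c (y /\<^sub>R a))"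
    using a by (auto simp: fun_eq_iff gm_def power_divide field_simps)
  note s = integral_scale[OF gm_meas[where 'a='a] gm_nonneg gm_integrable[OF c] a, of m]
  show "integrable lborel (\<lambda>y::'a::euclidean_space. norm y ^ m * exp (- (c / a\<^sup>2) * norm y ^ 2))"
    unfolding eq using s(1) by (rule integrable_mult_right)
  show "integral\<^sup>L lborel (\<lambda>y::'a. norm y ^ m * exp (- (c / a\<^sup>2) * norm y ^ 2))
       = a ^ (DIM('a) + m) * integral\<^sup>L lborel (gm m c :: 'a \<Rightarrow> real)"
    unfolding eq using s(2) by (simp add: power_add)
qed

lemma gm_pos: assumes c: "0 < c" shows "0 < integral\<^sup>L lborel (gm 0 c :: 'a::euclidean_space \<Rightarrow> real)"
proof -
  have "0 < exp (- c) * measure lborel (ball (0::'a) 1)"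
    using content_ball_pos[of 1 "0::'a"] by simp
  also have "\<dots> = integral\<^sup>L lborel (\<lambda>y::'a. exp (- c) * indicator (ball 0 1) y)"
    by simp
  also have "\<dots> \<le> integral\<^sup>L lborel (gm 0 c :: 'a \<Rightarrow> real)"
  proof (rule integral_mono)
    show "integrable lborel (\<lambda>y::'a. exp (- c) * indicator (ball 0 1) y)"
      by (intro integrable_mult_right integrable_real_indicator) (use emeasure_lborel_ball_finite[of "0::'a" 1] in auto)
    show "integrable lborel (gm 0 c :: 'a \<Rightarrow> real)" by (rule gm_integrable[OF c])
    fix y :: 'a
    show "exp (- c) * indicator (ball 0 1) y \<le> gm 0 c y"
    proof (cases "y \<in> ball 0 1")
      case True
      hence "norm y ^ 2 \<le> 1" by (simp add: abs_square_le_1)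
      hence "- c \<le> - c * norm y ^ 2" using c by (simp add: mult_left_le)
      thus ?thesis using True by (simp add: gm_def)
    qed (simp add: gm_nonneg)
  qed
  finally show ?thesis .
qed

lemma cos_lower: "1 - t\<^sup>2 / 2 \<le> cos (t::real)"
proof -
  have "cos t = cos (2 * (t / 2))" by simp
  also have "\<dots> = 1 - 2 * (sin (t / 2))\<^sup>2" by (rule cos_double_sin)
  finally have e: "cos t = 1 - 2 * (sin (t / 2))\<^sup>2" .
  have "\<bar>sin (t / 2)\<bar> \<le> \<bar>t / 2\<bar>" by (rule abs_sin_x_le_abs_x)
  hence "(sin (t / 2))\<^sup>2 \<le> (t / 2)\<^sup>2" by (metis abs_le_square_iff)
  thus ?thesis unfolding e by (simp add: power_divide)
qed

lemma integrand_tf: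
  "cis (- 2 * pi * (\<xi> \<bullet> y)) * tf c x y
     = complex_of_real (exp (- c * norm y ^ 2)) * cis (- (2 * pi * ((\<xi> - x) \<bullet> y)))"
proof -
  have "tf c x y = exp (complex_of_real (- c * (y \<bullet> y))) * exp (\<i> * complex_of_real (2 * pi * (x \<bullet> y)))"
    unfolding tf_def by (rule exp_add)
  also have "\<dots> = complex_of_real (exp (- c * norm y ^ 2)) * cis (2 * pi * (x \<bullet> y))"
    by (simp only: cis_conv_exp power2_norm_eq_inner exp_of_real)
  finally have "cis (- 2 * pi * (\<xi> \<bullet> y)) * tf c x y =
     complex_of_real (exp (- c * norm y ^ 2)) * (cis (- 2 * pi * (\<xi> \<bullet> y)) * cis (2 * pi * (x \<bullet> y)))"
    by (metis mult.left_commute)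
  also have e: "- 2 * pi * (\<xi> \<bullet> y) + 2 * pi * (x \<bullet> y) = - (2 * pi * ((\<xi> - x) \<bullet> y))"
    by (simp add: inner_diff_left algebra_simps)
  have "cis (- 2 * pi * (\<xi> \<bullet> y)) * cis (2 * pi * (x \<bullet> y)) = cis (- (2 * pi * ((\<xi> - x) \<bullet> y)))"
    by (simp only: cis_mult e)
  finally show ?thesis .
qed

lemma fourier_tf_lower:
  fixes x \<xi> :: "'a::euclidean_space"
  assumes a: "0 < a" and \<xi>: "dist x \<xi> < r"
  shows "a ^ DIM('a) * integral\<^sup>L lborel (gm 0 pi :: 'a \<Rightarrow> real)
           - 2 * pi\<^sup>2 * r\<^sup>2 * a ^ (DIM('a) + 2) * integral\<^sup>L lborel (gm 2 pi :: 'a \<Rightarrow> real)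
         \<le> norm (fourier (tf (pi / a\<^sup>2) x) \<xi>)"
proof -
  define c where "c = pi / a\<^sup>2"
  define \<eta> where "\<eta> = \<xi> - x"
  have nr: "norm \<eta> \<le> r" using \<xi> by (simp add: \<eta>_def dist_norm norm_minus_commute)
  have r0: "0 \<le> r" using \<xi> zero_le_dist[of x \<xi>] by linarith
  define h where "h y = cis (- 2 * pi * (\<xi> \<bullet> y)) * tf c x y" for y
  define g where "g y = exp (- c * norm y ^ 2)" for y :: 'a
  have h_eq: "h y = complex_of_real (g y) * cis (- (2 * pi * (\<eta> \<bullet> y)))" for y
    unfolding h_def g_def \<eta>_def by (rule integrand_tf)
  note g0 = gm_scale[OF pi_gt_zero a, of 0, where 'a='a]
  note g2 = gm_scale[OF pi_gt_zero a, of 2, where 'a='a]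
  have geq: "g = (\<lambda>y. norm y ^ 0 * exp (- (pi / a\<^sup>2) * norm y ^ 2))"
    by (rule ext) (simp only: g_def c_def power_0 mult_1)
  have g2eq: "(\<lambda>y. norm y ^ 2 * g y) = (\<lambda>y. norm y ^ 2 * exp (- (pi / a\<^sup>2) * norm y ^ 2))"
    by (rule ext) (simp only: g_def c_def)
  have gint: "integrable lborel g" unfolding geq by (rule g0(1))
  have g2int: "integrable lborel (\<lambda>y. norm y ^ 2 * g y)" unfolding g2eq by (rule g2(1))
  have hmeas: "h \<in> borel_measurable lborel"
    unfolding h_eq[abs_def] g_def cis_conv_exp by measurable
  have hint: "integrable lborel h"
    by (rule Bochner_Integration.integrable_bound[OF gint hmeas]) (auto simp: h_eq norm_mult g_def)
  have "Re (fourier (tf c x) \<xi>) = integral\<^sup>L lborel (\<lambda>y. Re (h y))"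
    unfolding fourier_def h_def[symmetric] using hint by (simp add: integral_Re)
  also have "integral\<^sup>L lborel (\<lambda>y. Re (h y)) = integral\<^sup>L lborel (\<lambda>y. g y * cos (2 * pi * (\<eta> \<bullet> y)))"
    by (simp add: h_eq)
  also have "\<dots> \<ge> integral\<^sup>L lborel (\<lambda>y. g y - 2 * pi\<^sup>2 * norm \<eta> ^ 2 * (norm y ^ 2 * g y))"
  proof (rule integral_mono)
    show "integrable lborel (\<lambda>y. g y - 2 * pi\<^sup>2 * norm \<eta> ^ 2 * (norm y ^ 2 * g y))"
      using gint g2int by (intro Bochner_Integration.integrable_diff integrable_mult_right)
    show "integrable lborel (\<lambda>y. g y * cos (2 * pi * (\<eta> \<bullet> y)))"
      using integrable_Re[OF hint] by (simp add: h_eq)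
    fix y :: 'a
    have "(2 * pi * (\<eta> \<bullet> y))\<^sup>2 = 4 * pi\<^sup>2 * (\<eta> \<bullet> y)\<^sup>2" by (simp add: power_mult_distrib)
    also have "(\<eta> \<bullet> y)\<^sup>2 \<le> (norm \<eta> * norm y)\<^sup>2"
      using power_mono[OF Cauchy_Schwarz_ineq2[of \<eta> y], of 2] by simp
    hence "4 * pi\<^sup>2 * (\<eta> \<bullet> y)\<^sup>2 \<le> 4 * pi\<^sup>2 * (norm \<eta> * norm y)\<^sup>2" by simp
    finally have "1 - 2 * pi\<^sup>2 * norm \<eta> ^ 2 * norm y ^ 2 \<le> 1 - (2 * pi * (\<eta> \<bullet> y))\<^sup>2 / 2"
      by (simp add: power_mult_distrib)
    also have "\<dots> \<le> cos (2 * pi * (\<eta> \<bullet> y))" by (rule cos_lower)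
    finally have "g y * (1 - 2 * pi\<^sup>2 * norm \<eta> ^ 2 * norm y ^ 2) \<le> g y * cos (2 * pi * (\<eta> \<bullet> y))"
      by (intro mult_left_mono) (auto simp: g_def)
    thus "g y - 2 * pi\<^sup>2 * norm \<eta> ^ 2 * (norm y ^ 2 * g y) \<le> g y * cos (2 * pi * (\<eta> \<bullet> y))"
      by (simp add: algebra_simps)
  qed
  also have "integral\<^sup>L lborel (\<lambda>y. g y - 2 * pi\<^sup>2 * norm \<eta> ^ 2 * (norm y ^ 2 * g y))
      = integral\<^sup>L lborel g - 2 * pi\<^sup>2 * norm \<eta> ^ 2 * integral\<^sup>L lborel (\<lambda>y. norm y ^ 2 * g y)"
    using gint g2int by (simp add: Bochner_Integration.integral_diff)
  also have "integral\<^sup>L lborel g = a ^ DIM('a) * integral\<^sup>L lborel (gm 0 pi :: 'a \<Rightarrow> real)"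
    unfolding geq using g0(2) by simp
  also have "integral\<^sup>L lborel (\<lambda>y. norm y ^ 2 * g y) = a ^ (DIM('a) + 2) * integral\<^sup>L lborel (gm 2 pi :: 'a \<Rightarrow> real)"
    unfolding g2eq by (rule g2(2))
  finally have "a ^ DIM('a) * integral\<^sup>L lborel (gm 0 pi :: 'a \<Rightarrow> real) -
     2 * pi\<^sup>2 * norm \<eta> ^ 2 * (a ^ (DIM('a) + 2) * integral\<^sup>L lborel (gm 2 pi :: 'a \<Rightarrow> real))
     \<le> Re (fourier (tf c x) \<xi>)" .
  moreover have "2 * pi\<^sup>2 * norm \<eta> ^ 2 * (a ^ (DIM('a) + 2) * integral\<^sup>L lborel (gm 2 pi :: 'a \<Rightarrow> real))
     \<le> 2 * pi\<^sup>2 * r ^ 2 * (a ^ (DIM('a) + 2) * integral\<^sup>L lborel (gm 2 pi :: 'a \<Rightarrow> real))"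
    using nr a by (intro mult_right_mono mult_left_mono power_mono integral_nonneg_AE)
      (auto simp: gm_nonneg)
  moreover have "Re (fourier (tf c x) \<xi>) \<le> norm (fourier (tf c x) \<xi>)" by (rule complex_Re_le_cmod)
  ultimately have "a ^ DIM('a) * integral\<^sup>L lborel (gm 0 pi :: 'a \<Rightarrow> real)
     - 2 * pi\<^sup>2 * r ^ 2 * (a ^ (DIM('a) + 2) * integral\<^sup>L lborel (gm 2 pi :: 'a \<Rightarrow> real))
     \<le> norm (fourier (tf c x) \<xi>)" by linarith
  thus ?thesis by (simp add: c_def mult.assoc)
qed

lemma Lp_norm_tf:
  fixes x :: "'a::euclidean_space"
  assumes a: "0 < a" and p: "0 < p"
  shows "Lp_norm p (tf (pi / a\<^sup>2) x) = (a ^ DIM('a) * integral\<^sup>L lborel (gm 0 (p * pi) :: 'a \<Rightarrow> real)) powr (1 / p)"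
proof -
  have pp: "0 < p * pi" using p by simp
  have "(\<lambda>y. norm (tf (pi / a\<^sup>2) x y) powr p) = (\<lambda>y::'a. norm y ^ 0 * exp (- (p * pi / a\<^sup>2) * norm y ^ 2))"
    by (simp add: norm_tf powr_def fun_eq_iff)
  thus ?thesis unfolding Lp_norm_def using gm_scale(2)[OF pp a, of 0, where 'a='a] by simp
qed

lemma ratio_algebra:
  fixes \<kappa> r Jp I0 C p d :: real
  assumes k: "0 < \<kappa>" and r: "0 < r" and J: "0 \<le> Jp" and I0: "0 < I0" and p: "0 < p"
  shows "C * ((\<kappa> / r) powr d * Jp) powr (1 / p) / ((\<kappa> / r) powr d * I0 / 2)
       = (C * Jp powr (1 / p) * (2 / I0) * \<kappa> powr (d / p - d)) * r powr (d - d / p)"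
proof -
  define a where "a = \<kappa> / r"
  have a: "0 < a" using k r by (simp add: a_def)
  have "(a powr d * Jp) powr (1 / p) = a powr (d / p) * Jp powr (1 / p)"
    using a J by (simp add: powr_mult powr_powr)
  hence "C * (a powr d * Jp) powr (1 / p) / (a powr d * I0 / 2)
      = C * Jp powr (1 / p) * (2 / I0) * (a powr (d / p) / a powr d)"
    using a I0 by (simp add: field_simps)
  also have "a powr (d / p) / a powr d = a powr (d / p - d)" by (simp add: powr_diff)
  also have "\<dots> = \<kappa> powr (d / p - d) * r powr (d - d / p)"
  proof -
    have e1: "(\<kappa> / r) powr (d / p - d) = \<kappa> powr (d / p - d) / r powr (d / p - d)"
      using k r by (intro powr_divide)
    have e2: "r powr (d - d / p) = inverse (r powr (d / p - d))"
      by (subst powr_minus[symmetric]) simp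
    show ?thesis unfolding a_def e1 e2 by (simp add: divide_inverse)
  qed
  finally show ?thesis unfolding a_def by (simp add: mult.assoc)
qed

lemma ball_bound:
  fixes p q C :: real
  assumes p: "1 \<le> p" and q: "1 \<le> q" and C: "0 \<le> C"
  shows "\<exists>M\<ge>0. \<forall>\<mu> :: 'a::euclidean_space measure. radon_measure \<mu> \<and> restriction \<mu> p q C \<longrightarrow>
     (\<forall>x r. 0 < r \<longrightarrow> emeasure \<mu> (ball x r) \<le> ennreal (M * r powr (real DIM('a) * q * (1 - 1 / p))))"
proof -
  define d where "d = real DIM('a)"
  define I0 where "I0 = integral\<^sup>L lborel (gm 0 pi :: 'a \<Rightarrow> real)"
  define I2 where "I2 = integral\<^sup>L lborel (gm 2 pi :: 'a \<Rightarrow> real)"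
  define Jp where "Jp = integral\<^sup>L lborel (gm 0 (p * pi) :: 'a \<Rightarrow> real)"
  have I0: "0 < I0" unfolding I0_def by (rule gm_pos) simp
  have I2: "0 \<le> I2" unfolding I2_def by (intro integral_nonneg_AE) (simp add: gm_nonneg)
  have J: "0 \<le> Jp" unfolding Jp_def by (intro integral_nonneg_AE) (simp add: gm_nonneg)
  have p0: "0 < p" using p by simp
  have q0: "0 < q" using q by simp
  define \<kappa> where "\<kappa> = sqrt (I0 / (4 * pi\<^sup>2 * (I2 + 1)))"
  have k: "0 < \<kappa>" unfolding \<kappa>_def using I0 I2 by (intro real_sqrt_gt_zero divide_pos_pos) auto
  have k2: "\<kappa>\<^sup>2 = I0 / (4 * pi\<^sup>2 * (I2 + 1))" unfolding \<kappa>_def using I0 I2 by simp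
  have key: "2 * pi\<^sup>2 * \<kappa>\<^sup>2 * I2 \<le> I0 / 2"
  proof -
    have "2 * pi\<^sup>2 * \<kappa>\<^sup>2 * I2 = (I0 / 2) * (I2 / (I2 + 1))"
    proof -
      have "0 < 4 * pi\<^sup>2 + I2 * (4 * pi\<^sup>2)" using I2 by (intro add_pos_nonneg) auto
      hence nz: "4 * pi\<^sup>2 + I2 * (4 * pi\<^sup>2) \<noteq> 0" "I2 + 1 \<noteq> 0" "pi\<^sup>2 \<noteq> 0" using I2 by auto
      show ?thesis unfolding k2 using nz by (simp add: field_simps)
    qed
    also have "\<dots> \<le> (I0 / 2) * 1" using I0 I2 by (intro mult_left_mono) auto
    finally show ?thesis by simp
  qed
  define K0 where "K0 = C * Jp powr (1 / p) * (2 / I0) * \<kappa> powr (d / p - d)"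
  define M where "M = K0 powr q"
  have M0: "0 \<le> M" unfolding M_def by simp
  show ?thesis
  proof (intro exI[of _ M] conjI M0 allI impI)
    fix \<mu> :: "'a measure" and x :: 'a and r :: real
    assume \<mu>: "radon_measure \<mu> \<and> restriction \<mu> p q C" and r: "0 < r"
    define a where "a = \<kappa> / r"
    have a: "0 < a" unfolding a_def using k r by simp
    define f where "f = tf (pi / a\<^sup>2) x"
    define L where "L = a ^ DIM('a) * I0 / 2"
    have L: "0 < L" unfolding L_def using a I0 by simp
    have lower: "L \<le> norm (fourier f \<xi>)" if "\<xi> \<in> ball x r" for \<xi>
    proof -
      have h1: "a ^ DIM('a) * I0 - 2 * pi\<^sup>2 * r\<^sup>2 * a ^ (DIM('a) + 2) * I2 \<le> norm (fourier f \<xi>)"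
        using fourier_tf_lower[OF a, of x \<xi> r] that unfolding f_def I0_def I2_def by simp
      have h2: "2 * pi\<^sup>2 * r\<^sup>2 * a ^ (DIM('a) + 2) * I2 = a ^ DIM('a) * (2 * pi\<^sup>2 * \<kappa>\<^sup>2 * I2)"
        unfolding a_def using r by (simp add: power_add field_simps power2_eq_square)
      have "a ^ DIM('a) * (2 * pi\<^sup>2 * \<kappa>\<^sup>2 * I2) \<le> a ^ DIM('a) * (I0 / 2)"
        using key a by (intro mult_left_mono) auto
      hence h3: "a ^ DIM('a) * (2 * pi\<^sup>2 * \<kappa>\<^sup>2 * I2) \<le> a ^ DIM('a) * I0 / 2" by simp
      show ?thesis unfolding L_def using h1 h2 h3 by linarith
    qed
    have sch: "schwartz f" unfolding f_def using a by (intro schwartz_tf) simp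
    have Lp: "Lp_norm p f = (a ^ DIM('a) * Jp) powr (1 / p)"
      unfolding f_def Jp_def by (rule Lp_norm_tf[OF a p0])
    have sets: "sets \<mu> = sets borel" and fin: "\<And>K. compact K \<Longrightarrow> emeasure \<mu> K < \<infinity>"
      using \<mu> unfolding radon_measure_def by auto
    have ballm: "ball x r \<in> sets \<mu>" using sets by simp
    have "emeasure \<mu> (ball x r) \<le> emeasure \<mu> (cball x r)"
      using sets by (intro emeasure_mono) auto
    also have "\<dots> < \<infinity>" by (rule fin) simp
    finally obtain m where m: "emeasure \<mu> (ball x r) = ennreal m" "0 \<le> m"
      using ennreal_cases less_irrefl top.not_eq_extremum by (metis infinity_ennreal_def)
    have "ennreal (L powr q) * emeasure \<mu> (ball x r) = (\<integral>\<^sup>+ \<xi>. ennreal (L powr q) * indicator (ball x r) \<xi> \<partial>\<mu>)"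
      using ballm by (simp add: nn_integral_cmult_indicator)
    also have "\<dots> \<le> (\<integral>\<^sup>+ \<xi>. ennreal (norm (fourier f \<xi>) powr q) \<partial>\<mu>)"
    proof (rule nn_integral_mono)
      fix \<xi> assume "\<xi> \<in> space \<mu>"
      show "ennreal (L powr q) * indicator (ball x r) \<xi> \<le> ennreal (norm (fourier f \<xi>) powr q)"
      proof (cases "\<xi> \<in> ball x r")
        case True
        hence "L powr q \<le> norm (fourier f \<xi>) powr q"
          using lower[OF True] L q0 by (intro powr_mono2) auto
        thus ?thesis using True by (simp add: ennreal_leI)
      qed simp
    qed
    also have "\<dots> \<le> ennreal ((C * Lp_norm p f) powr q)"
      using \<mu> sch unfolding restriction_def by blast
    finally have "ennreal (L powr q * m) \<le> ennreal ((C * Lp_norm p f) powr q)"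
      using m L by (simp add: ennreal_mult)
    hence "L powr q * m \<le> (C * Lp_norm p f) powr q"
      by (subst (asm) ennreal_le_iff) auto
    hence "m \<le> (C * Lp_norm p f) powr q / L powr q"
      using L by (simp add: field_simps)
    also have "\<dots> = (C * Lp_norm p f / L) powr q"
      using L C unfolding Lp by (intro powr_divide[symmetric])
    also have "C * Lp_norm p f / L = K0 * r powr (d - d / p)"
    proof -
      have ad: "a ^ DIM('a) = (\<kappa> / r) powr d"
        unfolding d_def a_def using a a_def by (simp add: powr_realpow)
      show ?thesis unfolding Lp L_def ad K0_def using ratio_algebra[OF k r J I0 p0, of C d] by simp
    qed
    also have "(K0 * r powr (d - d / p)) powr q = M * r powr (d * q * (1 - 1 / p))"
    proof -
      have K0: "0 \<le> K0" unfolding K0_def using C I0 by simp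
      have "(K0 * r powr (d - d / p)) powr q = K0 powr q * (r powr (d - d / p)) powr q"
        using K0 r by (intro powr_mult)
      also have "(r powr (d - d / p)) powr q = r powr (d * q * (1 - 1 / p))"
        by (simp add: powr_powr algebra_simps)
      finally show ?thesis unfolding M_def .
    qed
    finally show "emeasure \<mu> (ball x r) \<le> ennreal (M * r powr (real DIM('a) * q * (1 - 1 / p)))"
      unfolding m d_def by (intro ennreal_leI)
  qed
qed

lemma omega_pos: "0 \<le> s \<Longrightarrow> 0 < omega s"
  unfolding omega_def by (intro divide_pos_pos) auto

lemma density_part:
  fixes \<mu> :: "'a::euclidean_space measure"
  assumes M0: "0 \<le> M"
    and bd: "\<forall>x r. 0 < r \<longrightarrow> emeasure \<mu> (ball x r) \<le> ennreal (M * r powr t)"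
    and s: "0 \<le> s" and A: "A \<in> sets \<mu>" "emeasure \<mu> A > 0"
    and dens: "\<forall>x\<in>A. 0 < upper_density \<mu> s x \<and> upper_density \<mu> s x < \<infinity>"
  shows "t \<le> s"
proof (rule ccontr)
  assume "\<not> t \<le> s"
  hence ts: "0 < t - s" by simp
  have "A \<noteq> {}" using A by auto
  then obtain x where x: "x \<in> A" by blast
  have w: "0 < omega s" by (rule omega_pos[OF s])
  define g where "g r = ereal (M / omega s * r powr (t - s))" for r :: real
  have ev: "\<forall>\<^sub>F r in at_right 0. enn2ereal (emeasure \<mu> (ball x r)) / ereal (omega s * r powr s) \<le> g r"
  proof (rule eventually_at_rightI[of 0 1])
    fix r :: real assume "r \<in> {0<..<1}"
    hence r: "0 < r" by simp
    have "enn2ereal (emeasure \<mu> (ball x r)) \<le> enn2ereal (ennreal (M * r powr t))"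
      using bd r by (simp add: less_eq_ennreal.rep_eq)
    also have "\<dots> = ereal (M * r powr t)" using M0 by (simp add: enn2ereal_ennreal)
    finally have "enn2ereal (emeasure \<mu> (ball x r)) / ereal (omega s * r powr s)
        \<le> ereal (M * r powr t) / ereal (omega s * r powr s)"
      using w r by (intro ereal_divide_right_mono) auto
    also have "\<dots> = ereal (M * r powr t / (omega s * r powr s))"
      using w r by simp
    also have "M * r powr t / (omega s * r powr s) = M / omega s * r powr (t - s)"
      using w r by (simp add: powr_diff field_simps)
    finally show "enn2ereal (emeasure \<mu> (ball x r)) / ereal (omega s * r powr s) \<le> g r"
      unfolding g_def .
  qed simp
  have "upper_density \<mu> s x \<le> Limsup (at_right 0) g"
    unfolding upper_density_def by (rule Limsup_mono[OF ev])
  also have "Limsup (at_right 0) g = 0"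
  proof -
    have "((\<lambda>r::real. r powr (t - s)) \<longlongrightarrow> 0) (at_right 0)"
      by (rule tendsto_zero_powrI[OF _ tendsto_const _ ts])
         (auto intro: tendsto_ident_at eventually_at_rightI[of 0 1] simp: tendsto_ident_at)
    hence "((\<lambda>r. M / omega s * r powr (t - s)) \<longlongrightarrow> 0) (at_right 0)"
      by (rule tendsto_mult_right_zero)
    hence "(g \<longlongrightarrow> ereal 0) (at_right 0)" unfolding g_def by (rule tendsto_ereal)
    thus ?thesis by (intro lim_imp_Limsup) (auto simp: zero_ereal_def)
  qed
  finally show False using dens x by auto
qed

lemma omega_0: "omega 0 = 1" unfolding omega_def by simp

lemma ennreal_term_le_suminf: "(f::nat \<Rightarrow> ennreal) i \<le> suminf f"
proof -
  have "f i = (\<Sum>j\<in>{i}. f j)" by simp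
  also have "\<dots> \<le> suminf f" by (rule sum_le_suminf) (auto intro: summableI)
  finally show ?thesis .
qed

lemma haus_null:
  fixes \<mu> :: "'a::euclidean_space measure"
  assumes M0: "0 \<le> M"
    and bd: "\<forall>x r. 0 < r \<longrightarrow> emeasure \<mu> (ball x r) \<le> ennreal (M * r powr t)"
    and sets: "sets \<mu> = sets borel" and t0: "0 \<le> t"
    and A: "A \<in> sets borel" and hA: "hausdorff t A = 0"
  shows "emeasure \<mu> A = 0"
proof -
  have "hausdorff_delta t 1 A \<le> hausdorff t A"
    unfolding hausdorff_def by (rule SUP_upper) simp
  hence hd: "hausdorff_delta t 1 A = 0" using hA by simp
  show ?thesis
  proof (cases "t = 0")
    case True
    have "A = {}"
    proof (rule ccontr)
      assume "A \<noteq> {}"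
      then obtain a where a: "a \<in> A" by blast
      have "1 \<le> hausdorff_delta t 1 A"
        unfolding hausdorff_delta_def
      proof (rule INF_greatest)
        fix C :: "nat \<Rightarrow> 'a set"
        assume "C \<in> {C. A \<subseteq> (\<Union>i. C i) \<and> (\<forall>i. bounded (C i) \<and> diameter (C i) \<le> 1)}"
        then obtain i where i: "a \<in> C i" using a by blast
        have "hcontrib t (C i) = 1" using i True by (auto simp: hcontrib_def omega_0)
        thus "1 \<le> (\<Sum>i. hcontrib t (C i))"
          using ennreal_term_le_suminf[of "\<lambda>i. hcontrib t (C i)" i] by simp
      qed
      thus False using hd by simp
    qed
    thus ?thesis by simp
  next
    case False
    hence t: "0 < t" using t0 by simp
    have w: "0 < omega t" by (rule omega_pos[OF t0])
    define K where "K = M * 4 powr t / omega t + 2 * M"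
    have K0: "0 \<le> K" unfolding K_def using M0 w by simp
    have epsb: "emeasure \<mu> A \<le> 0 + ennreal e" if e: "0 < e" for e
    proof -
      define \<epsilon> where "\<epsilon> = e / (K + 1)"
      have eps: "0 < \<epsilon>" unfolding \<epsilon>_def using e K0 by simp
      have Ke: "K * \<epsilon> \<le> e"
      proof -
        have "K * \<epsilon> = e * (K / (K + 1))" unfolding \<epsilon>_def using K0 by (simp add: field_simps)
        also have "\<dots> \<le> e * 1" using e K0 by (intro mult_left_mono) auto
        finally show ?thesis by simp
      qed
      have "hausdorff_delta t 1 A < ennreal \<epsilon>" using hd eps by simp
      then obtain C where C: "A \<subseteq> (\<Union>i. C i)" "\<And>i. bounded (C i)" "\<And>i. diameter (C i) \<le> 1"
        and Cs: "(\<Sum>i. hcontrib t (C i)) < ennreal \<epsilon>"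
        unfolding hausdorff_delta_def INF_less_iff by blast
      define h where "h i = (if C i = {} then 0 else omega t * (diameter (C i) / 2) powr t)" for i
      have h0: "0 \<le> h i" for i unfolding h_def using w by simp
      have hc: "hcontrib t (C i) = ennreal (h i)" for i
        unfolding hcontrib_def h_def using False by simp
      have hs: "(\<Sum>i. ennreal (h i)) < ennreal \<epsilon>" using Cs hc by simp
      have hsum: "summable h"
        using hs h0 by (intro summable_suminf_not_top) (auto dest: order.strict_trans[OF _ ennreal_less_top])
      have hlt: "suminf h < \<epsilon>"
        using hs suminf_ennreal2[OF h0 hsum] suminf_nonneg[OF hsum h0] by (simp add: ennreal_less_iff)
      define \<rho> where "\<rho> i = ((2 * diameter (C i)) powr t + \<epsilon> * (1 / 2) ^ i) powr (1 / t)" for i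
      define c where "c i = (SOME y. y \<in> C i)" for i
      define B where "B i = (if C i = {} then {} else ball (c i) (\<rho> i))" for i
      define u where "u i = M * 4 powr t / omega t * h i + M * \<epsilon> * (1 / 2) ^ i" for i
      have X0: "0 < (2 * diameter (C i)) powr t + \<epsilon> * (1 / 2) ^ i" for i
        using eps by (intro add_nonneg_pos) auto
      have \<rho>t: "\<rho> i powr t = (2 * diameter (C i)) powr t + \<epsilon> * (1 / 2) ^ i" for i
        unfolding \<rho>_def using X0[of i] t by (simp add: powr_powr)
      have \<rho>pos: "0 < \<rho> i" for i unfolding \<rho>_def using X0[of i] by simp
      have diam_lt: "diameter (C i) < \<rho> i" if ne: "C i \<noteq> {}" for i
      proof -
        obtain y where y: "y \<in> C i" using ne by blast
        have dn: "0 \<le> diameter (C i)"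
          using diameter_bounded_bound[OF C(2) y y] by simp
        have "((2 * diameter (C i)) powr t) powr (1 / t) < \<rho> i"
          unfolding \<rho>_def using eps t by (intro powr_less_mono2) auto
        moreover have "((2 * diameter (C i)) powr t) powr (1 / t) = 2 * diameter (C i)"
          using t dn by (simp add: powr_powr)
        ultimately show ?thesis using dn by simp
      qed
      have cover: "A \<subseteq> (\<Union>i. B i)"
      proof
        fix y assume "y \<in> A"
        then obtain i where yi: "y \<in> C i" using C(1) by blast
        hence ne: "C i \<noteq> {}" by blast
        have ci: "c i \<in> C i" unfolding c_def using yi by (rule someI)
        have "dist (c i) y \<le> diameter (C i)" by (rule diameter_bounded_bound[OF C(2) ci yi])
        also have "\<dots> < \<rho> i" by (rule diam_lt[OF ne])
        finally have "y \<in> B i" using ne by (simp add: B_def)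
        thus "y \<in> (\<Union>i. B i)" by blast
      qed
      have "B i \<in> sets \<mu>" for i unfolding B_def sets by simp
      hence Bm: "range B \<subseteq> sets \<mu>" by blast
      have Bu: "emeasure \<mu> (B i) \<le> ennreal (u i)" for i
      proof (cases "C i = {}")
        case True thus ?thesis by (simp add: B_def)
      next
        case ne: False
        have "emeasure \<mu> (B i) \<le> ennreal (M * \<rho> i powr t)"
          using bd \<rho>pos ne by (simp add: B_def)
        also have "M * \<rho> i powr t = u i"
        proof -
          obtain y where y: "y \<in> C i" using ne by blast
          have dn: "0 \<le> diameter (C i) / 2" using diameter_bounded_bound[OF C(2) y y] by simp
          have "(2 * diameter (C i)) powr t = (4 * (diameter (C i) / 2)) powr t" by simp
          also have "\<dots> = 4 powr t * (diameter (C i) / 2) powr t"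
            by (rule powr_mult)
          also have "\<dots> = 4 powr t / omega t * h i" using ne w by (simp add: h_def)
          finally show ?thesis unfolding \<rho>t u_def by (simp add: algebra_simps)
        qed
        finally show ?thesis .
      qed
      have g: "(\<lambda>i. (1 / 2 :: real) ^ i) sums 2"
        using geometric_sums[of "1 / 2 :: real"] by simp
      have usum: "u sums (M * 4 powr t / omega t * suminf h + M * \<epsilon> * 2)"
        unfolding u_def
        by (intro sums_add sums_mult summable_sums hsum g)
      have u0: "0 \<le> u i" for i unfolding u_def using M0 w h0 eps by simp
      have "emeasure \<mu> A \<le> emeasure \<mu> (\<Union>i. B i)"
        using cover Bm sets by (intro emeasure_mono) auto
      also have "\<dots> \<le> (\<Sum>i. emeasure \<mu> (B i))" by (rule emeasure_subadditive_countably[OF Bm])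
      also have "\<dots> \<le> (\<Sum>i. ennreal (u i))" by (intro suminf_le Bu) (auto intro: summableI)
      also have "\<dots> = ennreal (M * 4 powr t / omega t * suminf h + M * \<epsilon> * 2)"
        by (rule suminf_ennreal_eq[OF u0 usum])
      also have "\<dots> \<le> ennreal e"
      proof (rule ennreal_leI)
        have "M * 4 powr t / omega t * suminf h \<le> M * 4 powr t / omega t * \<epsilon>"
          using hlt M0 w by (intro mult_left_mono) auto
        hence "M * 4 powr t / omega t * suminf h + M * \<epsilon> * 2 \<le> K * \<epsilon>"
          unfolding K_def by (simp add: algebra_simps)
        thus "M * 4 powr t / omega t * suminf h + M * \<epsilon> * 2 \<le> e" using Ke by simp
      qed
      finally show ?thesis by simp
    qed
    have "emeasure \<mu> A \<le> 0"
    proof (rule ennreal_le_epsilon)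
      fix e :: real assume "0 < e"
      thus "emeasure \<mu> A \<le> 0 + ennreal e" by (rule epsb)
    qed
    thus ?thesis by simp
  qed
qed

theorem mainTheorem2:
  fixes p q C :: real
  assumes p: "1 \<le> p" and q: "1 \<le> q" and C: "0 \<le> C"
  defines "d \<equiv> real DIM('a::euclidean_space)"
  shows "\<exists>M::real. \<forall>\<mu> :: 'a measure. radon_measure \<mu> \<and> restriction \<mu> p q C \<longrightarrow>
           (\<forall>x r. 0 < r \<longrightarrow> emeasure \<mu> (ball x r) \<le> ennreal (M * r powr (d * q * (1 - 1 / p))))
         \<and> (\<forall>A \<in> sets borel. hausdorff (d * q * (1 - 1 / p)) A = 0 \<longrightarrow> emeasure \<mu> A = 0)
         \<and> (\<forall>s. 0 \<le> s \<longrightarrow>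
              (\<exists>A \<in> sets \<mu>. emeasure \<mu> A > 0 \<and>
                  (\<forall>x\<in>A. 0 < upper_density \<mu> s x \<and> upper_density \<mu> s x < \<infinity>))
              \<longrightarrow> d * q * (1 - 1 / p) \<le> s)"
proof -
  obtain M where M0: "0 \<le> M" and MB: "\<forall>\<mu> :: 'a measure. radon_measure \<mu> \<and> restriction \<mu> p q C \<longrightarrow>
     (\<forall>x r. 0 < r \<longrightarrow> emeasure \<mu> (ball x r) \<le> ennreal (M * r powr (real DIM('a) * q * (1 - 1 / p))))"
    using ball_bound[OF p q C] by blast
  have t0: "0 \<le> d * q * (1 - 1 / p)"
    unfolding d_def using p q by (intro mult_nonneg_nonneg) (auto simp: field_simps)
  show ?thesis
  proof (intro exI[of _ M] allI impI conjI ballI)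
    fix \<mu> :: "'a measure" assume \<mu>: "radon_measure \<mu> \<and> restriction \<mu> p q C"
    have bd: "\<forall>x r. 0 < r \<longrightarrow> emeasure \<mu> (ball x r) \<le> ennreal (M * r powr (d * q * (1 - 1 / p)))"
      using MB \<mu> unfolding d_def by blast
    have sets: "sets \<mu> = sets borel" using \<mu> unfolding radon_measure_def by blast
    show "0 < r \<Longrightarrow> emeasure \<mu> (ball x r) \<le> ennreal (M * r powr (d * q * (1 - 1 / p)))" for x r
      using bd by blast
    show "emeasure \<mu> A = 0" if "A \<in> sets borel" "hausdorff (d * q * (1 - 1 / p)) A = 0" for A
      by (rule haus_null[OF M0 bd sets t0 that])
    fix s :: real
    assume s: "0 \<le> s" and ex: "\<exists>A \<in> sets \<mu>. emeasure \<mu> A > 0 \<and>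
                  (\<forall>x\<in>A. 0 < upper_density \<mu> s x \<and> upper_density \<mu> s x < \<infinity>)"
    then obtain A where A: "A \<in> sets \<mu>" "emeasure \<mu> A > 0"
      "\<forall>x\<in>A. 0 < upper_density \<mu> s x \<and> upper_density \<mu> s x < \<infinity>" by blast
    show "d * q * (1 - 1 / p) \<le> s" by (rule density_part[OF M0 bd s A])
  qed
qed

end
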